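(* Let $u\in A^*$, $R\subseteq[0,|u|]$, $p=(u,R)$ and $p^*=(u,[0,|u|]\setminus R)$. Then for every word $w\in A^*$, $$\binom{w}{p}=\sum_{v\in A^*}(-1)^{|v|-|u|}\binom{v}{p^*}\binom{w}{v}$$ (the sum has finitely many nonzero terms).
   Context: $A$ is a finite alphabet, $A^*$ the set of finite words over $A$, $|w|$ the length, $[0,k]=\{0,1,\dots,k\}$. For words $u=a_1\cdots a_k$, $v=b_1\cdots b_n$, $\binom{v}{u}$ is the number of order-preserving injections $\varphi:[k]\to[n]$ with $a_i=b_{\varphi(i)}$ for all $i$. For $R\subseteq[0,k]$, an occurrence of $p=(u,R)$ in $v$ is such an injection satisfying additionally $\varphi(i+1)=\varphi(i)+1$ for all $i\in R$, with conventions $\varphi(0)=0$ and $\varphi(k+1)=n+1$; $\binom{v}{p}=\binom{v}{u,R}$ is the number of occurrences of $p$ in $v$. (So $R=\emptyset$ gives $\binom{v}{u}$, $R=[1,k-1]$ counts factor occurrences, $R=[0,k]$ gives $[u=v]$.) *)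

theory Defs
  imports Main "HOL-Library.FuncSet"
begin

text \<open>Words are lists; positions are 1-based as in the paper.  An order-preserving
map phi from [1,k] to [1,n] is represented as an extensional function on {1..k}.\<close>

definition ext_occ :: "(nat \<Rightarrow> nat) \<Rightarrow> nat \<Rightarrow> nat \<Rightarrow> nat \<Rightarrow> nat" where
  "ext_occ \<phi> k n i = (if i = 0 then 0 else if i = k + 1 then n + 1 else \<phi> i)"

definition occurrences :: "'a list \<Rightarrow> nat set \<Rightarrow> 'a list \<Rightarrow> (nat \<Rightarrow> nat) set" where
  "occurrences u R v =
     {\<phi> \<in> {1..length u} \<rightarrow>\<^sub>E {1..length v}.
        (\<forall>i\<in>{1..length u}. \<forall>j\<in>{1..length u}. i < j \<longrightarrow> \<phi> i < \<phi> j) \<and>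
        (\<forall>i\<in>{1..length u}. u ! (i - 1) = v ! (\<phi> i - 1)) \<and>
        (\<forall>i\<in>R. ext_occ \<phi> (length u) (length v) (i + 1)
                 = ext_occ \<phi> (length u) (length v) i + 1)}"

definition pbinom :: "'a list \<Rightarrow> 'a list \<Rightarrow> nat set \<Rightarrow> nat" where
  "pbinom v u R = card (occurrences u R v)"

definition wbinom :: "'a list \<Rightarrow> 'a list \<Rightarrow> nat" where
  "wbinom v u = pbinom v u {}"

end

theory Submission
  imports Defs
begin


lemma alt_sum_pow:
  assumes "finite X"
  shows "(\<Sum>S\<in>Pow X. (-1::int) ^ card S) = (if X = {} then 1 else 0)"
  using assms
proof (induction X rule: finite_induct)
  case empty thus ?case by simp
next
  case (insert x X)
  have "Pow (insert x X) = Pow X \<union> insert x ` Pow X" by (rule Pow_insert)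
  moreover have "Pow X \<inter> insert x ` Pow X = {}" using insert by auto
  moreover have "inj_on (insert x) (Pow X)"
    by (rule inj_on_inverseI[where g="\<lambda>S. S - {x}"]) (use insert in auto)
  moreover have "\<And>S. S \<in> Pow X \<Longrightarrow> card (insert x S) = Suc (card S)"
    using insert by (auto intro!: card_insert_disjoint dest: finite_subset)
  ultimately have "(\<Sum>S\<in>Pow (insert x X). (-1::int) ^ card S)
     = (\<Sum>S\<in>Pow X. (-1::int) ^ card S) + (\<Sum>S\<in>Pow X. (-1::int) ^ Suc (card S))"
    using insert by (simp add: sum.union_disjoint sum.reindex)
  also have "\<dots> = 0" by (simp add: sum_negf)
  finally show ?case by simp
qed

definition smono :: "(nat \<Rightarrow> nat) \<Rightarrow> nat \<Rightarrow> bool" where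
  "smono \<phi> k \<longleftrightarrow> (\<forall>i\<in>{1..k}. \<forall>j\<in>{1..k}. i < j \<longrightarrow> \<phi> i < \<phi> j)"

lemma ext_smono:
  assumes "smono \<phi> k" "\<phi> ` {1..k} \<subseteq> {1..n}" "i < j" "j \<le> k + 1"
  shows "ext_occ \<phi> k n i < ext_occ \<phi> k n j"
proof -
  have A: "\<And>i. i \<in> {1..k} \<Longrightarrow> 1 \<le> \<phi> i \<and> \<phi> i \<le> n" using assms(2) by (force simp: image_subset_iff)
  show ?thesis using assms(3,4) A[of i] A[of j] assms(1) unfolding ext_occ_def smono_def
    by (cases "i = 0"; cases "j = k+1"; auto)
qed

lemma ext_range:
  assumes "\<phi> ` {1..k} \<subseteq> {1..n}" "i \<le> k + 1"
  shows "ext_occ \<phi> k n i \<le> n + 1"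
proof -
  have "i = 0 \<or> i = k+1 \<or> i \<in> {1..k}" using assms(2) by auto
  then show ?thesis using assms(1) unfolding ext_occ_def image_subset_iff by fastforce
qed

lemma ext_inner:
  assumes "i \<in> {1..k}" shows "ext_occ \<phi> k n i = \<phi> i"
  using assms unfolding ext_occ_def by auto

lemma ext_comp:
  assumes "\<psi> ` {1..k} \<subseteq> {1..m}" "i \<le> k + 1"
  shows "ext_occ (restrict (\<lambda>i. \<chi> (\<psi> i)) {1..k}) k n i = ext_occ \<chi> m n (ext_occ \<psi> k m i)"
proof -
  { assume "i \<in> {1..k}"
    then have "\<psi> i \<in> {1..m}" using assms by (force simp: image_subset_iff)
    then have ?thesis using \<open>i \<in> {1..k}\<close> unfolding ext_occ_def by auto }
  then show ?thesis using assms(2) unfolding ext_occ_def by (cases "i = 0"; cases "i = k+1"; auto)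
qed





definition enum :: "nat set \<Rightarrow> nat \<Rightarrow> nat" where
  "enum T j = sorted_list_of_set T ! (j - 1)"

lemma enum_in: "finite T \<Longrightarrow> j \<in> {1..card T} \<Longrightarrow> enum T j \<in> T"
  unfolding enum_def
  by (metis Suc_le_eq atLeastAtMost_iff diff_less length_sorted_list_of_set less_le_trans
      nth_mem set_sorted_list_of_set zero_less_one)

lemma enum_smono: "finite T \<Longrightarrow> smono (enum T) (card T)"
  unfolding smono_def enum_def
proof (intro ballI impI)
  fix i j assume "finite T" "i \<in> {1..card T}" "j \<in> {1..card T}" "i < j"
  then show "sorted_list_of_set T ! (i - 1) < sorted_list_of_set T ! (j - 1)"
    using strict_sorted_list_of_set[of T]
    by (auto simp: sorted_wrt_iff_nth_less)
qed

lemma enum_image: "finite T \<Longrightarrow> enum T ` {1..card T} = T"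
proof
  assume f: "finite T"
  show "enum T ` {1..card T} \<subseteq> T" using enum_in[OF f] by auto
  show "T \<subseteq> enum T ` {1..card T}"
  proof
    fix x assume "x \<in> T"
    then have "x \<in> set (sorted_list_of_set T)" using f by simp
    then obtain p where p: "p < card T" "sorted_list_of_set T ! p = x"
      by (metis in_set_conv_nth length_sorted_list_of_set)
    then show "x \<in> enum T ` {1..card T}" unfolding enum_def
      by (intro image_eqI[of _ _ "Suc p"]) auto
  qed
qed

lemma smono_inj: "smono \<chi> m \<Longrightarrow> inj_on \<chi> {1..m}"
  unfolding smono_def inj_on_def by (metis linorder_neqE_nat less_irrefl)

lemma smono_card: "smono \<chi> m \<Longrightarrow> card (\<chi> ` {1..m}) = m"
  using smono_inj by (simp add: card_image)

lemma enum_unique: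
  assumes "smono \<chi> m" "j \<in> {1..m}"
  shows "enum (\<chi> ` {1..m}) j = \<chi> j"
proof -
  let ?L = "map \<chi> [1..<m+1]"
  have "sorted_wrt (<) ?L" using assms(1) unfolding smono_def
    by (auto simp: sorted_wrt_iff_nth_less simp del: upt_Suc)
  moreover have "set ?L = \<chi> ` {1..m}" by auto
  moreover have "length ?L = card (\<chi> ` {1..m})" using smono_card[OF assms(1)] by simp
  ultimately have "sorted_list_of_set (\<chi> ` {1..m}) = ?L"
    using sorted_list_of_set_unique[of "\<chi> ` {1..m}" ?L] by auto
  then show ?thesis using assms(2) unfolding enum_def
    by (auto simp del: upt_Suc)
qed



definition sub :: "'a list \<Rightarrow> nat set \<Rightarrow> 'a list" where
  "sub w T = map (\<lambda>j. w ! (enum T j - 1)) [1..<card T + 1]"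

lemma length_sub[simp]: "length (sub w T) = card T"
  unfolding sub_def by simp

lemma nth_sub: "p < card T \<Longrightarrow> sub w T ! p = w ! (enum T (Suc p) - 1)"
  unfolding sub_def by (simp del: upt_Suc)

lemma occ_iff:
  "\<phi> \<in> occurrences u R v \<longleftrightarrow>
     \<phi> \<in> {1..length u} \<rightarrow>\<^sub>E {1..length v} \<and> smono \<phi> (length u) \<and>
     (\<forall>i\<in>{1..length u}. u ! (i - 1) = v ! (\<phi> i - 1)) \<and>
     (\<forall>i\<in>R. ext_occ \<phi> (length u) (length v) (i + 1) = ext_occ \<phi> (length u) (length v) i + 1)"
  unfolding occurrences_def smono_def by blast

lemma PiE_img: "\<phi> \<in> A \<rightarrow>\<^sub>E B \<Longrightarrow> \<phi> ` A \<subseteq> B" by auto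

lemma wbinom_eq:
  "wbinom w v = card {T \<in> Pow {1..length w}. sub w T = v}"
proof -
  let ?m = "length v" and ?n = "length w"
  let ?h = "\<lambda>\<chi>::nat\<Rightarrow>nat. \<chi> ` {1..?m}"
  have "bij_betw ?h (occurrences v {} w) {T \<in> Pow {1..?n}. sub w T = v}"
  proof (rule bij_betwI')
    fix x y assume x: "x \<in> occurrences v {} w" and y: "y \<in> occurrences v {} w"
    show "(?h x = ?h y) = (x = y)"
    proof
      assume e: "?h x = ?h y"
      show "x = y"
      proof (rule extensionalityI)
        show "x \<in> extensional {1..?m}" "y \<in> extensional {1..?m}"
          using x y by (auto simp: occ_iff PiE_iff)
        fix j assume "j \<in> {1..?m}"
        then show "x j = y j" using enum_unique[of x ?m j] enum_unique[of y ?m j] e x y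
          by (auto simp: occ_iff)
      qed
    qed simp
  next
    fix \<chi> assume c: "\<chi> \<in> occurrences v {} w"
    then have sm: "smono \<chi> ?m" and pie: "\<chi> \<in> {1..?m} \<rightarrow>\<^sub>E {1..?n}"
      and let_: "\<forall>i\<in>{1..?m}. v ! (i - 1) = w ! (\<chi> i - 1)" by (auto simp: occ_iff)
    have cd: "card (?h \<chi>) = ?m" using smono_card[OF sm] .
    have "sub w (?h \<chi>) = v"
    proof (rule nth_equalityI)
      show "length (sub w (?h \<chi>)) = length v" using cd by simp
      fix p assume "p < length (sub w (?h \<chi>))"
      then have p: "p < ?m" using cd by simp
      then have "sub w (?h \<chi>) ! p = w ! (\<chi> (Suc p) - 1)"
        using nth_sub[of p "?h \<chi>" w] cd enum_unique[OF sm, of "Suc p"] by simp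
      also have "\<dots> = v ! p" using let_ p by (metis Suc_leI atLeastAtMost_iff diff_Suc_1 le_add1 plus_1_eq_Suc)
      finally show "sub w (?h \<chi>) ! p = v ! p" .
    qed
    then show "?h \<chi> \<in> {T \<in> Pow {1..?n}. sub w T = v}" using PiE_img[OF pie] by auto
  next
    fix T assume "T \<in> {T \<in> Pow {1..?n}. sub w T = v}"
    then have T: "T \<subseteq> {1..?n}" "sub w T = v" by auto
    have f: "finite T" using T(1) finite_subset by blast
    have cT: "card T = ?m" using T(2) length_sub by metis
    let ?\<chi> = "restrict (enum T) {1..?m}"
    have "?\<chi> \<in> occurrences v {} w"
      unfolding occ_iff
    proof (intro conjI)
      show "?\<chi> \<in> {1..?m} \<rightarrow>\<^sub>E {1..?n}" using enum_in[OF f] T(1) cT by auto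
      show "smono ?\<chi> ?m" using enum_smono[OF f] cT unfolding smono_def by auto
      show "\<forall>i\<in>{1..?m}. v ! (i - 1) = w ! (?\<chi> i - 1)"
      proof
        fix i assume i: "i \<in> {1..?m}"
        then have "v ! (i - 1) = sub w T ! (i - 1)" using T(2) by simp
        also have "\<dots> = w ! (enum T i - 1)" using i cT nth_sub[of "i - 1" T w] by auto
        finally show "v ! (i - 1) = w ! (?\<chi> i - 1)" using i by simp
      qed
    qed simp
    moreover have "?h ?\<chi> = T" using enum_image[OF f] cT by simp
    ultimately show "\<exists>\<chi>\<in>occurrences v {} w. T = ?h \<chi>" by metis
  qed
  then show ?thesis unfolding wbinom_def pbinom_def by (rule bij_betw_same_card)
qed



lemma ext_reflect:
  assumes "smono \<phi> k" "\<phi> ` {1..k} \<subseteq> {1..n}" "a \<le> k + 1" "b \<le> k + 1"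
    "ext_occ \<phi> k n a < ext_occ \<phi> k n b"
  shows "a < b"
proof (rule ccontr)
  assume "\<not> a < b"
  then have "b < a \<or> b = a" by auto
  then show False using ext_smono[OF assms(1,2), of b a] assms by auto
qed

lemma smono_reflect:
  assumes "smono \<chi> m" "a \<in> {1..m}" "b \<in> {1..m}" "\<chi> a < \<chi> b"
  shows "a < b"
proof (rule ccontr)
  assume "\<not> a < b"
  then have "b < a \<or> b = a" by auto
  then show False using assms unfolding smono_def by force
qed

definition Phi :: "'a list \<Rightarrow> nat set \<Rightarrow> 'a list \<Rightarrow> nat set \<Rightarrow> (nat \<Rightarrow> nat) set" where
  "Phi u R w T = {\<phi> \<in> occurrences u {} w. \<phi> ` {1..length u} \<subseteq> T \<and>
     (\<forall>i\<in>{0..length u} - R. \<forall>x\<in>T. \<not> (ext_occ \<phi> (length u) (length w) i < x \<and>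
                                        x < ext_occ \<phi> (length u) (length w) (i + 1)))}"

lemma pbinom_sub:
  assumes T: "T \<subseteq> {1..length w}"
  shows "pbinom (sub w T) u ({0..length u} - R) = card (Phi u R w T)"
proof -
  let ?k = "length u" and ?n = "length w" and ?m = "card T" and ?v = "sub w T"
  have f: "finite T" using T finite_subset by blast
  define \<chi> where "\<chi> = restrict (enum T) {1..?m}"
  have sm: "smono \<chi> ?m" using enum_smono[OF f] unfolding smono_def \<chi>_def by auto
  have img: "\<chi> ` {1..?m} = T" using enum_image[OF f] unfolding \<chi>_def by simp
  have imgn: "\<chi> ` {1..?m} \<subseteq> {1..?n}" using img T by simp
  have vlen: "length ?v = ?m" by simp
  have vnth: "\<And>j. j \<in> {1..?m} \<Longrightarrow> ?v ! (j - 1) = w ! (\<chi> j - 1)"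
  proof -
    fix j assume j: "j \<in> {1..?m}"
    then have "j - 1 < ?m" by auto
    then have "?v ! (j - 1) = w ! (enum T (Suc (j - 1)) - 1)" by (rule nth_sub)
    then show "?v ! (j - 1) = w ! (\<chi> j - 1)" using j unfolding \<chi>_def by auto
  qed
  let ?h = "\<lambda>\<psi>. restrict (\<lambda>i. \<chi> (\<psi> i)) {1..?k}"
  have "bij_betw ?h (occurrences u ({0..?k} - R) ?v) (Phi u R w T)"
  proof (rule bij_betwI')
    fix x y assume x: "x \<in> occurrences u ({0..?k} - R) ?v" and y: "y \<in> occurrences u ({0..?k} - R) ?v"
    show "(?h x = ?h y) = (x = y)"
    proof
      assume e: "?h x = ?h y"
      show "x = y"
      proof (rule extensionalityI)
        show "x \<in> extensional {1..?k}" "y \<in> extensional {1..?k}"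
          using x y by (auto simp: occ_iff PiE_iff)
        fix i assume i: "i \<in> {1..?k}"
        then have "\<chi> (x i) = \<chi> (y i)" using fun_cong[OF e, of i] by simp
        moreover have "x i \<in> {1..?m}" "y i \<in> {1..?m}" using x y i by (auto simp: occ_iff PiE_iff)
        ultimately show "x i = y i" using smono_inj[OF sm] by (auto dest: inj_onD)
      qed
    qed simp
  next
    fix \<psi> assume ps: "\<psi> \<in> occurrences u ({0..?k} - R) ?v"
    then have psm: "smono \<psi> ?k" and pie: "\<psi> \<in> {1..?k} \<rightarrow>\<^sub>E {1..?m}"
      and let_: "\<forall>i\<in>{1..?k}. u ! (i - 1) = ?v ! (\<psi> i - 1)"
      and con: "\<forall>i\<in>{0..?k} - R. ext_occ \<psi> ?k ?m (i + 1) = ext_occ \<psi> ?k ?m i + 1"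
      by (auto simp: occ_iff)
    have psimg: "\<psi> ` {1..?k} \<subseteq> {1..?m}" using pie by auto
    have occ0: "?h \<psi> \<in> occurrences u {} w"
      unfolding occ_iff
    proof (intro conjI)
      show "?h \<psi> \<in> {1..?k} \<rightarrow>\<^sub>E {1..?n}" using psimg imgn by (auto simp: image_subset_iff)
      show "smono (?h \<psi>) ?k" using psm sm psimg unfolding smono_def image_subset_iff by auto
      show "\<forall>i\<in>{1..?k}. u ! (i - 1) = w ! (?h \<psi> i - 1)"
        using let_ vnth psimg by (auto simp: image_subset_iff)
    qed simp
    have sub: "?h \<psi> ` {1..?k} \<subseteq> T" using psimg img by auto
    have gap: "\<forall>i\<in>{0..?k} - R. \<forall>x\<in>T. \<not> (ext_occ (?h \<psi>) ?k ?n i < x \<and> x < ext_occ (?h \<psi>) ?k ?n (i + 1))"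
    proof (intro ballI notI)
      fix i x assume i: "i \<in> {0..?k} - R" and x: "x \<in> T"
        and lt: "ext_occ (?h \<psi>) ?k ?n i < x \<and> x < ext_occ (?h \<psi>) ?k ?n (i + 1)"
      have "x \<in> \<chi> ` {1..?m}" using x img by simp
      then obtain j where j': "x = \<chi> j" "j \<in> {1..?m}" by (rule imageE)
      then have j: "j \<in> {1..?m}" "x = \<chi> j" by auto
      have xe: "x = ext_occ \<chi> ?m ?n j" using j ext_inner by simp
      have e1: "ext_occ (?h \<psi>) ?k ?n i = ext_occ \<chi> ?m ?n (ext_occ \<psi> ?k ?m i)"
        using ext_comp[OF psimg] i by auto
      have e2: "ext_occ (?h \<psi>) ?k ?n (i+1) = ext_occ \<chi> ?m ?n (ext_occ \<psi> ?k ?m i + 1)"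
        using ext_comp[OF psimg, of "i+1"] i con by auto
      have b2: "ext_occ \<psi> ?k ?m (i+1) \<le> ?m + 1" using ext_range[OF psimg] i by auto
      then have b1: "ext_occ \<psi> ?k ?m i + 1 \<le> ?m + 1" using con i by auto
      have "ext_occ \<psi> ?k ?m i < j" using ext_reflect[OF sm imgn, of "ext_occ \<psi> ?k ?m i" j] lt e1 xe b1 j by auto
      moreover have "j < ext_occ \<psi> ?k ?m i + 1" using ext_reflect[OF sm imgn, of j "ext_occ \<psi> ?k ?m i + 1"] lt e2 xe b1 j by auto
      ultimately show False by simp
    qed
    show "?h \<psi> \<in> Phi u R w T" unfolding Phi_def using occ0 sub gap by blast
  next
    fix \<phi> assume ph: "\<phi> \<in> Phi u R w T"
    then have pie: "\<phi> \<in> {1..?k} \<rightarrow>\<^sub>E {1..?n}" and psm: "smono \<phi> ?k"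
      and let_: "\<forall>i\<in>{1..?k}. u ! (i - 1) = w ! (\<phi> i - 1)"
      and sub: "\<phi> ` {1..?k} \<subseteq> T"
      and gap: "\<forall>i\<in>{0..?k} - R. \<forall>x\<in>T. \<not> (ext_occ \<phi> ?k ?n i < x \<and> x < ext_occ \<phi> ?k ?n (i + 1))"
      unfolding Phi_def by (auto simp: occ_iff)
    define \<psi> where "\<psi> = restrict (\<lambda>i. inv_into {1..?m} \<chi> (\<phi> i)) {1..?k}"
    have psin: "\<And>i. i \<in> {1..?k} \<Longrightarrow> \<psi> i \<in> {1..?m}"
    proof -
      fix i assume i: "i \<in> {1..?k}"
      then have "\<phi> i \<in> \<chi> ` {1..?m}" using sub img by auto
      then have "inv_into {1..?m} \<chi> (\<phi> i) \<in> {1..?m}" by (rule inv_into_into)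
      then show "\<psi> i \<in> {1..?m}" using i unfolding \<psi>_def by simp
    qed
    have chps: "\<And>i. i \<in> {1..?k} \<Longrightarrow> \<chi> (\<psi> i) = \<phi> i"
    proof -
      fix i assume i: "i \<in> {1..?k}"
      then have "\<phi> i \<in> \<chi> ` {1..?m}" using sub img by auto
      then have "\<chi> (inv_into {1..?m} \<chi> (\<phi> i)) = \<phi> i" by (rule f_inv_into_f)
      then show "\<chi> (\<psi> i) = \<phi> i" using i unfolding \<psi>_def by simp
    qed
    have psimg: "\<psi> ` {1..?k} \<subseteq> {1..?m}" using psin by auto
    have hps: "?h \<psi> = \<phi>"
    proof (rule extensionalityI)
      show "?h \<psi> \<in> extensional {1..?k}" by simp
      show "\<phi> \<in> extensional {1..?k}" using pie by (auto simp: PiE_iff)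
    qed (simp add: chps)
    have pssm: "smono \<psi> ?k" unfolding smono_def
    proof (intro ballI impI)
      fix i j assume "i \<in> {1..?k}" "j \<in> {1..?k}" "i < j"
      then have "\<phi> i < \<phi> j" using psm unfolding smono_def by blast
      then have "\<chi> (\<psi> i) < \<chi> (\<psi> j)" using chps \<open>i \<in> {1..?k}\<close> \<open>j \<in> {1..?k}\<close> by simp
      then show "\<psi> i < \<psi> j"
        using smono_reflect[OF sm psin[OF \<open>i \<in> {1..?k}\<close>] psin[OF \<open>j \<in> {1..?k}\<close>]] by blast
    qed
    have "\<psi> \<in> occurrences u ({0..?k} - R) ?v"
      unfolding occ_iff
    proof (intro conjI)
      show "\<psi> \<in> {1..?k} \<rightarrow>\<^sub>E {1..length ?v}" using psin unfolding \<psi>_def by auto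
      show "smono \<psi> ?k" by fact
      show "\<forall>i\<in>{1..?k}. u ! (i - 1) = ?v ! (\<psi> i - 1)" using let_ vnth psin chps by auto
      show "\<forall>i\<in>{0..?k} - R. ext_occ \<psi> ?k (length ?v) (i + 1) = ext_occ \<psi> ?k (length ?v) i + 1"
      proof (intro ballI, rule ccontr)
        fix i assume i: "i \<in> {0..?k} - R"
          and ne: "ext_occ \<psi> ?k (length ?v) (i + 1) \<noteq> ext_occ \<psi> ?k (length ?v) i + 1"
        let ?a = "ext_occ \<psi> ?k ?m i" and ?b = "ext_occ \<psi> ?k ?m (i+1)"
        have ab: "?a < ?b" using ext_smono[OF pssm psimg, of i "i+1"] i by auto
        have b: "?b \<le> ?m + 1" using ext_range[OF psimg, of "i+1"] i by auto
        have j: "?a + 1 \<in> {1..?m}" using ab b ne by auto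
        have "ext_occ \<chi> ?m ?n ?a < ext_occ \<chi> ?m ?n (?a + 1)"
          using ext_smono[OF sm imgn, of ?a "?a+1"] j by auto
        moreover have "ext_occ \<chi> ?m ?n (?a + 1) < ext_occ \<chi> ?m ?n ?b"
          using ext_smono[OF sm imgn, of "?a+1" ?b] j ab b ne by auto
        moreover have "ext_occ \<chi> ?m ?n ?a = ext_occ \<phi> ?k ?n i"
          using ext_comp[OF psimg, of i \<chi> ?n] hps i by auto
        moreover have "ext_occ \<chi> ?m ?n ?b = ext_occ \<phi> ?k ?n (i+1)"
          using ext_comp[OF psimg, of "i+1" \<chi> ?n] hps i by auto
        moreover have "ext_occ \<chi> ?m ?n (?a + 1) \<in> T"
          using j img ext_inner[OF j] by auto
        ultimately show False using gap i by auto
      qed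
    qed
    then show "\<exists>\<psi>\<in>occurrences u ({0..?k} - R) ?v. \<phi> = ?h \<psi>" using hps by metis
  qed
  then show ?thesis unfolding pbinom_def by (rule bij_betw_same_card)
qed



lemma occ0_basic:
  assumes "\<phi> \<in> occurrences u R w"
  shows "smono \<phi> (length u)" "\<phi> ` {1..length u} \<subseteq> {1..length w}"
  using assms by (auto simp: occ_iff)

lemma gap_notin_img:
  assumes "smono \<phi> k" "\<phi> ` {1..k} \<subseteq> {1..n}" "i \<le> k"
    "ext_occ \<phi> k n i < x" "x < ext_occ \<phi> k n (i+1)" "x \<in> \<phi> ` {1..k}"
  shows False
proof -
  obtain j where j: "x = \<phi> j" "j \<in> {1..k}" using assms(6) by (rule imageE)
  have xe: "x = ext_occ \<phi> k n j" using j ext_inner by simp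
  have "i < j" using ext_reflect[OF assms(1,2), of i j] assms j xe by auto
  moreover have "j < i + 1" using ext_reflect[OF assms(1,2), of j "i+1"] assms j xe by auto
  ultimately show False by simp
qed

lemma gap_cover:
  assumes "smono \<phi> k" "\<phi> ` {1..k} \<subseteq> {1..n}" "x \<in> {1..n} - \<phi> ` {1..k}"
  shows "\<exists>i\<le>k. ext_occ \<phi> k n i < x \<and> x < ext_occ \<phi> k n (i+1)"
proof -
  let ?e = "ext_occ \<phi> k n"
  have ex: "x < ?e (k+1)" using assms(3) unfolding ext_occ_def by auto
  define j where "j = (LEAST j. x < ?e j)"
  have xj: "x < ?e j" unfolding j_def using ex by (rule LeastI)
  have jk: "j \<le> k + 1" unfolding j_def using ex by (rule Least_le)
  have j0: "j \<noteq> 0" using xj unfolding ext_occ_def by (cases "j = 0") auto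
  have le: "\<not> x < ?e (j - 1)" unfolding j_def using j0 by (metis diff_less j_def not_less_Least zero_less_one gr0I)
  have "?e (j - 1) \<noteq> x"
  proof
    assume eq: "?e (j - 1) = x"
    show False
    proof (cases "j - 1 = 0")
      case True then show ?thesis using eq assms(3) unfolding ext_occ_def by auto
    next
      case False
      then have "j - 1 \<in> {1..k}" using jk j0 xj ex by auto
      then show ?thesis using eq assms(3) ext_inner[of "j-1" k \<phi> n] by auto
    qed
  qed
  then have "?e (j - 1) < x" using le by auto
  then show ?thesis using xj jk j0 by (intro exI[of _ "j - 1"]) auto
qed

definition Xs :: "'a list \<Rightarrow> nat set \<Rightarrow> 'a list \<Rightarrow> (nat \<Rightarrow> nat) \<Rightarrow> nat set" where
  "Xs u R w \<phi> = {x \<in> {1..length w} - \<phi> ` {1..length u}. \<forall>i\<in>{0..length u} - R.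
       \<not> (ext_occ \<phi> (length u) (length w) i < x \<and> x < ext_occ \<phi> (length u) (length w) (i + 1))}"

lemma Xs_empty_iff:
  assumes R: "R \<subseteq> {0..length u}" and ph: "\<phi> \<in> occurrences u {} w"
  shows "Xs u R w \<phi> = {} \<longleftrightarrow> \<phi> \<in> occurrences u R w"
proof -
  let ?k = "length u" and ?n = "length w"
  let ?e = "ext_occ \<phi> ?k ?n"
  have sm: "smono \<phi> ?k" and im: "\<phi> ` {1..?k} \<subseteq> {1..?n}" using occ0_basic[OF ph] by auto
  have occR: "\<phi> \<in> occurrences u R w \<longleftrightarrow> (\<forall>i\<in>R. ?e (i+1) = ?e i + 1)"
    using ph by (auto simp: occ_iff)
  show ?thesis
  proof
    assume X: "Xs u R w \<phi> = {}"
    show "\<phi> \<in> occurrences u R w" unfolding occR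
    proof (rule ballI, rule ccontr)
      fix i assume i: "i \<in> R" and ne: "?e (i+1) \<noteq> ?e i + 1"
      have ik: "i \<le> ?k" using i R by auto
      have lt: "?e i < ?e (i+1)" using ext_smono[OF sm im, of i "i+1"] ik by auto
      have rg: "?e (i+1) \<le> ?n + 1" using ext_range[OF im, of "i+1"] ik by auto
      let ?x = "?e i + 1"
      have x1: "?x \<in> {1..?n}" using lt rg ne by auto
      have x2: "?x \<notin> \<phi> ` {1..?k}" using gap_notin_img[OF sm im ik, of ?x] lt ne by auto
      have x3: "\<forall>i'\<in>{0..?k} - R. \<not> (?e i' < ?x \<and> ?x < ?e (i' + 1))"
      proof (intro ballI notI)
        fix i' assume i': "i' \<in> {0..?k} - R" and g: "?e i' < ?x \<and> ?x < ?e (i' + 1)"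
        have "i' \<noteq> i" using i i' by auto
        then have "i' < i \<or> i < i'" by auto
        then show False
        proof
          assume "i' < i"
          then have "?e (i'+1) \<le> ?e i" using ext_smono[OF sm im, of "i'+1" i] ik
            by (cases "i' + 1 = i") auto
          then show False using g by auto
        next
          assume "i < i'"
          then have "?e (i+1) \<le> ?e i'" using ext_smono[OF sm im, of "i+1" i'] i'
            by (cases "i + 1 = i'") auto
          then show False using g ne lt by auto
        qed
      qed
      have "?x \<in> Xs u R w \<phi>" unfolding Xs_def using x1 x2 x3 by blast
      then show False using X by auto
    qed
  next
    assume o: "\<phi> \<in> occurrences u R w"
    show "Xs u R w \<phi> = {}"
    proof (rule ccontr)
      assume "Xs u R w \<phi> \<noteq> {}"
      then obtain x where x: "x \<in> Xs u R w \<phi>" by auto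
      then have xx: "x \<in> {1..?n} - \<phi> ` {1..?k}" unfolding Xs_def by auto
      obtain i where i: "i \<le> ?k" "?e i < x" "x < ?e (i+1)" using gap_cover[OF sm im xx] by auto
      show False
      proof (cases "i \<in> R")
        case True then show False using o occR i by auto
      next
        case False then show False using x i unfolding Xs_def by auto
      qed
    qed
  qed
qed

lemma finite_occ: "finite (occurrences u R w)"
proof -
  have "occurrences u R w \<subseteq> {1..length u} \<rightarrow>\<^sub>E {1..length w}" using occ_iff[of _ u R w] by blast
  moreover have "finite ({1..length u} \<rightarrow>\<^sub>E {1..length w})" by (rule finite_PiE) auto
  ultimately show ?thesis by (rule finite_subset)
qed

lemma Good_sum:
  assumes ph: "\<phi> \<in> occurrences u {} w"
  shows "(\<Sum>T\<in>{T \<in> Pow {1..length w}. \<phi> \<in> Phi u R w T}. (-1::int) ^ (card T - length u))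
         = (\<Sum>S\<in>Pow (Xs u R w \<phi>). (-1::int) ^ card S)"
proof -
  let ?k = "length u" and ?n = "length w"
  let ?e = "ext_occ \<phi> ?k ?n"
  let ?I = "\<phi> ` {1..?k}"
  have sm: "smono \<phi> ?k" and im: "?I \<subseteq> {1..?n}" using occ0_basic[OF ph] by auto
  have cI: "card ?I = ?k" using smono_card[OF sm] .
  have fX: "finite (Xs u R w \<phi>)" unfolding Xs_def by auto
  have bij: "bij_betw (\<lambda>S. ?I \<union> S) (Pow (Xs u R w \<phi>)) {T \<in> Pow {1..?n}. \<phi> \<in> Phi u R w T}"
  proof (rule bij_betwI')
    fix S1 S2 assume "S1 \<in> Pow (Xs u R w \<phi>)" "S2 \<in> Pow (Xs u R w \<phi>)"
    then have "S1 \<inter> ?I = {}" "S2 \<inter> ?I = {}" unfolding Xs_def by auto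
    then show "(?I \<union> S1 = ?I \<union> S2) = (S1 = S2)" by blast
  next
    fix S assume S: "S \<in> Pow (Xs u R w \<phi>)"
    have "?I \<union> S \<subseteq> {1..?n}" using im S unfolding Xs_def by auto
    moreover have "\<phi> \<in> Phi u R w (?I \<union> S)"
      unfolding Phi_def
    proof (intro CollectI conjI ph)
      show "?I \<subseteq> ?I \<union> S" by auto
      show "\<forall>i\<in>{0..?k} - R. \<forall>x\<in>?I \<union> S. \<not> (?e i < x \<and> x < ?e (i + 1))"
      proof (intro ballI notI)
        fix i x assume i: "i \<in> {0..?k} - R" and x: "x \<in> ?I \<union> S" and g: "?e i < x \<and> x < ?e (i + 1)"
        show False
        proof (cases "x \<in> ?I")
          case True then show False using gap_notin_img[OF sm im, of i x] i g by auto
        next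
          case False then have "x \<in> Xs u R w \<phi>" using x S by auto
          then show False using i g unfolding Xs_def by auto
        qed
      qed
    qed
    ultimately show "?I \<union> S \<in> {T \<in> Pow {1..?n}. \<phi> \<in> Phi u R w T}" by auto
  next
    fix T assume T: "T \<in> {T \<in> Pow {1..?n}. \<phi> \<in> Phi u R w T}"
    then have T1: "T \<subseteq> {1..?n}" and T2: "?I \<subseteq> T"
      and T3: "\<forall>i\<in>{0..?k} - R. \<forall>x\<in>T. \<not> (?e i < x \<and> x < ?e (i + 1))"
      unfolding Phi_def by auto
    have "T - ?I \<in> Pow (Xs u R w \<phi>)" unfolding Xs_def using T1 T3 by auto
    moreover have "T = ?I \<union> (T - ?I)" using T2 by auto
    ultimately show "\<exists>S\<in>Pow (Xs u R w \<phi>). T = ?I \<union> S" by blast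
  qed
  have "(\<Sum>T\<in>{T \<in> Pow {1..?n}. \<phi> \<in> Phi u R w T}. (-1::int) ^ (card T - ?k))
      = (\<Sum>S\<in>Pow (Xs u R w \<phi>). (-1::int) ^ (card (?I \<union> S) - ?k))"
    using sum.reindex_bij_betw[OF bij, of "\<lambda>T. (-1::int) ^ (card T - ?k)"] by simp
  also have "\<dots> = (\<Sum>S\<in>Pow (Xs u R w \<phi>). (-1::int) ^ card S)"
  proof (rule sum.cong[OF refl])
    fix S assume S: "S \<in> Pow (Xs u R w \<phi>)"
    then have "S \<inter> ?I = {}" "finite S" using fX unfolding Xs_def by (auto dest: finite_subset)
    then have "card (?I \<union> S) = ?k + card S" using cI by (subst card_Un_disjoint) auto
    then show "(-1::int) ^ (card (?I \<union> S) - ?k) = (-1) ^ card S" by simp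
  qed
  finally show ?thesis .
qed



theorem mainTheorem8:
  fixes u w :: "('a::finite) list" and R :: "nat set"
  assumes "R \<subseteq> {0..length u}"
  defines "t \<equiv> (\<lambda>v::'a list. (-1::int) ^ (length v - length u)
                   * int (pbinom v u ({0..length u} - R)) * int (wbinom w v))"
  shows "finite {v. t v \<noteq> 0} \<and> int (pbinom w u R) = (\<Sum>v\<in>{v. t v \<noteq> 0}. t v)"
proof -
  let ?k = "length u" and ?n = "length w"
  let ?P = "Pow {1..?n}"
  let ?V = "{v::'a list. length v \<le> ?n}"
  let ?O = "occurrences u {} w"
  define a where "a = (\<lambda>v::'a list. (-1::int) ^ (length v - ?k) * int (pbinom v u ({0..?k} - R)))"
  have fV: "finite ?V" using finite_lists_length_le[of "UNIV::'a set" ?n] by simp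
  have fP: "finite ?P" by simp
  have subV: "{v. t v \<noteq> 0} \<subseteq> ?V"
  proof
    fix v assume "v \<in> {v. t v \<noteq> 0}"
    then have "wbinom w v \<noteq> 0" unfolding t_def by auto
    then obtain T where T: "T \<in> ?P" "sub w T = v" unfolding wbinom_eq
      by (metis (mono_tags, lifting) card.empty empty_iff mem_Collect_eq subsetI subset_empty)
    have "card T \<le> card {1..?n}" using T(1) by (intro card_mono) auto
    then show "v \<in> ?V" using T(2) length_sub[of w T] by auto
  qed
  have fin: "finite {v. t v \<noteq> 0}" using finite_subset[OF subV fV] .
  have "(\<Sum>v\<in>{v. t v \<noteq> 0}. t v) = (\<Sum>v\<in>?V. t v)"
    by (rule sum.mono_neutral_left[OF fV subV]) auto
  also have "\<dots> = (\<Sum>v\<in>?V. \<Sum>T\<in>{T \<in> ?P. sub w T = v}. a (sub w T))"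
  proof (rule sum.cong[OF refl])
    fix v assume "v \<in> ?V"
    have "(\<Sum>T\<in>{T \<in> ?P. sub w T = v}. a (sub w T)) = (\<Sum>T\<in>{T \<in> ?P. sub w T = v}. a v)"
      by (rule sum.cong) auto
    also have "\<dots> = t v" unfolding t_def a_def wbinom_eq by simp
    finally show "t v = (\<Sum>T\<in>{T \<in> ?P. sub w T = v}. a (sub w T))" by simp
  qed
  also have "\<dots> = (\<Sum>T\<in>?P. a (sub w T))"
  proof (rule sum.group[OF fP fV])
    show "sub w ` ?P \<subseteq> ?V"
    proof
      fix v assume "v \<in> sub w ` ?P"
      then obtain T where T: "T \<in> ?P" "v = sub w T" by auto
      have "card T \<le> card {1..?n}" using T(1) by (intro card_mono) auto
      then show "v \<in> ?V" using T(2) by simp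
    qed
  qed
  also have "\<dots> = (\<Sum>T\<in>?P. \<Sum>\<phi>\<in>?O. if \<phi> \<in> Phi u R w T then (-1::int) ^ (card T - ?k) else 0)"
  proof (rule sum.cong[OF refl])
    fix T assume T: "T \<in> ?P"
    have sO: "Phi u R w T \<subseteq> ?O" unfolding Phi_def by auto
    have "a (sub w T) = (-1::int) ^ (card T - ?k) * int (card (Phi u R w T))"
      unfolding a_def using pbinom_sub[of T w u R] T by simp
    also have "\<dots> = (\<Sum>\<phi>\<in>Phi u R w T. (-1::int) ^ (card T - ?k))" by simp
    also have "\<dots> = (\<Sum>\<phi>\<in>{\<phi> \<in> ?O. \<phi> \<in> Phi u R w T}. (-1::int) ^ (card T - ?k))"
      using sO by (intro sum.cong) auto
    also have "\<dots> = (\<Sum>\<phi>\<in>?O. if \<phi> \<in> Phi u R w T then (-1::int) ^ (card T - ?k) else 0)"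
      by (rule sum.inter_filter[OF finite_occ])
    finally show "a (sub w T) = \<dots>" .
  qed
  also have "\<dots> = (\<Sum>\<phi>\<in>?O. \<Sum>T\<in>?P. if \<phi> \<in> Phi u R w T then (-1::int) ^ (card T - ?k) else 0)"
    by (rule sum.swap)
  also have "\<dots> = (\<Sum>\<phi>\<in>?O. if \<phi> \<in> occurrences u R w then 1 else 0)"
  proof (rule sum.cong[OF refl])
    fix \<phi> assume ph: "\<phi> \<in> ?O"
    have "(\<Sum>T\<in>?P. if \<phi> \<in> Phi u R w T then (-1::int) ^ (card T - ?k) else 0)
        = (\<Sum>T\<in>{T \<in> ?P. \<phi> \<in> Phi u R w T}. (-1::int) ^ (card T - ?k))"
      by (rule sum.inter_filter[OF fP, symmetric])
    also have "\<dots> = (\<Sum>S\<in>Pow (Xs u R w \<phi>). (-1::int) ^ card S)" by (rule Good_sum[OF ph])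
    also have "\<dots> = (if Xs u R w \<phi> = {} then 1 else 0)"
      by (rule alt_sum_pow) (simp add: Xs_def)
    also have "\<dots> = (if \<phi> \<in> occurrences u R w then 1 else 0)"
      using Xs_empty_iff[OF assms(1) ph] by simp
    finally show "(\<Sum>T\<in>?P. if \<phi> \<in> Phi u R w T then (-1::int) ^ (card T - ?k) else 0) = \<dots>" .
  qed
  also have "\<dots> = int (card (occurrences u R w))"
  proof -
    have "occurrences u R w \<subseteq> ?O" by (auto simp: occ_iff)
    then have e: "{\<phi> \<in> ?O. \<phi> \<in> occurrences u R w} = occurrences u R w" by auto
    have "(\<Sum>\<phi>\<in>?O. if \<phi> \<in> occurrences u R w then (1::int) else 0) = (\<Sum>\<phi>\<in>{\<phi> \<in> ?O. \<phi> \<in> occurrences u R w}. 1)"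
      by (rule sum.inter_filter[OF finite_occ, symmetric])
    then have "(\<Sum>\<phi>\<in>?O. if \<phi> \<in> occurrences u R w then (1::int) else 0) = (\<Sum>\<phi>\<in>occurrences u R w. 1)"
      using e by simp
    then show ?thesis by simp
  qed
  finally show ?thesis using fin unfolding pbinom_def by simp
qed

end
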